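(* Let $\alpha=(\alpha_1,\ldots,\alpha_n)$ be a composition, $\sigma\in S_n$, and $i\in\{1,\ldots,n-1\}$ with $\alpha_i=\alpha_{i+1}$. Then for every $T\in\mathrm{NAF}(\alpha,\sigma)$, $$\sum_{U\in\mathrm{F}(\alpha,\sigma s_i)}P_i(T,U)=1.$$
   Context: Permutations are in one-line notation; $\sigma s_i$ is $\sigma$ with the entries in positions $i,i+1$ exchanged. A composition is a sequence of nonnegative integers. The skyline diagram is $\mathrm{dg}(\alpha)=\{(j,r):1\le j\le n,\ 1\le r\le\alpha_j\}$ ($j$ = column, $r$ = row) and the augmented diagram is $\mathrm{adg}(\alpha)=\mathrm{dg}(\alpha)\cup\{(j,0):1\le j\le n\}$ (row $0$ is the basement). For $u=(j,r)\in\mathrm{dg}(\alpha)$: $\mathrm{leg}(u)=\alpha_j-r$; the left arm set is $\{(j',r-1)\in\mathrm{adg}(\alpha):j'<j,\ \alpha_{j'}<\alpha_j\}$, the right arm set is $\{(j',r)\in\mathrm{dg}(\alpha):j'>j,\ \alpha_{j'}\le\alpha_j\}$, $\mathrm{Arm}(u)$ is their union and $\mathrm{arm}(u)=|\mathrm{Arm}(u)|$. Two boxes of $\mathrm{adg}(\alpha)$ attack each other if they are in the same row, or in consecutive rows with the box in the higher row strictly to the right of the box in the lower row. A filling of shape $\alpha$ and basement $\tau\in S_n$ is a map $T:\mathrm{adg}(\alpha)\to\{1,\ldots,n\}$ with $T(j,0)=\tau_j$; $\mathrm{F}(\alpha,\tau)$ is the set of these, and $\mathrm{NAF}(\alpha,\tau)$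 the subset of non-attacking ones (attacking boxes have distinct entries). For integers $a,b$ let $\chi(a,b)=1$ if $a>b$ and $0$ otherwise, and $\chi(a,b,c)=\chi(a,b)+\chi(b,c)-\chi(a,c)$. Fix $i$ with $\alpha_i=\alpha_{i+1}$. For a filling $T$ and $0\le r\le\alpha_i$, $\mathrm{swap}_r(T)$ exchanges the entries of boxes $(i,r)$ and $(i+1,r)$, and $\Omega_{0,h}=\mathrm{swap}_h\circ\cdots\circ\mathrm{swap}_0$. For $T\in\mathrm{NAF}(\alpha,\tau)$ and $0\le r\le\alpha_i-1$, let $a=T(i,r)$, $b=T(i+1,r)$, $c=T(i,r+1)$, $d=T(i+1,r+1)$, $A=\mathrm{arm}(i+1,r+1)$, $\ell=\mathrm{leg}(i+1,r+1)$, and define $\rho_r(T)\in\mathbb{Q}(q,t)$: if $a,b,c,d$ are distinct, $\rho_r(T)=0$ when $\chi(c,d,a)=\chi(c,d,b)$ and $\rho_r(T)=1$ when $\chi(c,d,a)=\chi(d,c,b)$; if exactly three of them are distinct, then $\rho_r(T)=0$ if $b=c$, $\rho_r(T)=1$ if $b=d$, and $\rho_r(T)=t^{1-\chi(d,a,b)}\frac{1-q^{\ell+1}t^{A+1}}{1-q^{\ell+1}t^{A+2}}$ if $a=c$; if $a=c$ and $b=d$, $\rho_r(T)=1$. Also set $\rho_{\alpha_i}(T)=0$. For $T\in\mathrm{NAF}(\alpha,\tau)$ and $U\in\mathrm{F}(\alpha,\tau s_i)$, $P_i(T,U)=\left(\prod_{r=0}^{h-1}\rho_r(T)\right)(1-\rho_h(T))$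 if $U=\Omega_{0,h}(T)$ for some $h\in\{0,\ldots,\alpha_i\}$, and $P_i(T,U)=0$ otherwise. *)

theory Defs
  imports Main "HOL-Computational_Algebra.Polynomial" "HOL-Computational_Algebra.Fraction_Field"
    "HOL-Combinatorics.Permutations" "HOL-Combinatorics.Transposition"
begin

text \<open>Compositions are lists of naturals; positions are 1-indexed: part alpha j = alpha_j.\<close>
definition part :: "nat list \<Rightarrow> nat \<Rightarrow> nat" where
  "part \<alpha> j = (if 1 \<le> j \<and> j \<le> length \<alpha> then \<alpha> ! (j - 1) else 0)"

text \<open>Boxes are pairs (column, row).\<close>
definition dg :: "nat list \<Rightarrow> (nat \<times> nat) set" where
  "dg \<alpha> = {(j, r). 1 \<le> j \<and> j \<le> length \<alpha> \<and> 1 \<le> r \<and> r \<le> part \<alpha> j}"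

definition adg :: "nat list \<Rightarrow> (nat \<times> nat) set" where
  "adg \<alpha> = dg \<alpha> \<union> {(j, 0) | j. 1 \<le> j \<and> j \<le> length \<alpha>}"

definition leg :: "nat list \<Rightarrow> nat \<times> nat \<Rightarrow> nat" where
  "leg \<alpha> u = part \<alpha> (fst u) - snd u"

definition Arm :: "nat list \<Rightarrow> nat \<times> nat \<Rightarrow> (nat \<times> nat) set" where
  "Arm \<alpha> u = (case u of (j, r) \<Rightarrow>
     {(j', r') \<in> adg \<alpha>. r' = r - 1 \<and> j' < j \<and> part \<alpha> j' < part \<alpha> j}
     \<union> {(j', r') \<in> dg \<alpha>. r' = r \<and> j' > j \<and> part \<alpha> j' \<le> part \<alpha> j})"

definition arm :: "nat list \<Rightarrow> nat \<times> nat \<Rightarrow> nat" where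
  "arm \<alpha> u = card (Arm \<alpha> u)"

definition attack :: "nat list \<Rightarrow> nat \<times> nat \<Rightarrow> nat \<times> nat \<Rightarrow> bool" where
  "attack \<alpha> u v \<longleftrightarrow> u \<in> adg \<alpha> \<and> v \<in> adg \<alpha> \<and> u \<noteq> v \<and>
     (snd u = snd v
      \<or> (snd v = snd u + 1 \<and> fst v > fst u)
      \<or> (snd u = snd v + 1 \<and> fst u > fst v))"

type_synonym filling = "nat \<times> nat \<Rightarrow> nat"

text \<open>A filling is a map on adg alpha; we represent it extensionally (value 0 outside adg alpha),
  so that F alpha tau is in bijection with the set of maps adg alpha -> {1..n}.\<close>
definition F :: "nat list \<Rightarrow> (nat \<Rightarrow> nat) \<Rightarrow> filling set" where
  "F \<alpha> \<tau> = {T. (\<forall>u \<in> adg \<alpha>. T u \<in> {1..length \<alpha>})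
               \<and> (\<forall>j. 1 \<le> j \<and> j \<le> length \<alpha> \<longrightarrow> T (j, 0) = \<tau> j)
               \<and> (\<forall>u. u \<notin> adg \<alpha> \<longrightarrow> T u = 0)}"

definition NAF :: "nat list \<Rightarrow> (nat \<Rightarrow> nat) \<Rightarrow> filling set" where
  "NAF \<alpha> \<tau> = {T \<in> F \<alpha> \<tau>. \<forall>u v. attack \<alpha> u v \<longrightarrow> T u \<noteq> T v}"

definition chi :: "nat \<Rightarrow> nat \<Rightarrow> int" where
  "chi a b = (if a > b then 1 else 0)"

definition chi3 :: "nat \<Rightarrow> nat \<Rightarrow> nat \<Rightarrow> int" where
  "chi3 a b c = chi a b + chi b c - chi a c"

definition swap_row :: "nat \<Rightarrow> nat \<Rightarrow> filling \<Rightarrow> filling" where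
  "swap_row i r T = T((i, r) := T (i + 1, r), (i + 1, r) := T (i, r))"

definition Omega :: "nat \<Rightarrow> nat \<Rightarrow> filling \<Rightarrow> filling" where
  "Omega i h T = fold (\<lambda>r. swap_row i r) [0..<Suc h] T"

text \<open>The field Q(q,t) = fraction field of Q[t][q].\<close>
type_synonym qt = "rat poly poly fract"

definition qv :: qt where "qv = Fract [:0, 1:] 1"
definition tv :: qt where "tv = Fract [:[:0, 1:]:] 1"

definition rho :: "nat list \<Rightarrow> nat \<Rightarrow> filling \<Rightarrow> nat \<Rightarrow> qt" where
  "rho \<alpha> i T r =
    (if r = part \<alpha> i then 0 else
     (let a = T (i, r); b = T (i + 1, r); c = T (i, r + 1); d = T (i + 1, r + 1);
          A = arm \<alpha> (i + 1, r + 1); l = leg \<alpha> (i + 1, r + 1) in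
      if card {a, b, c, d} = 4 then
        (if chi3 c d a = chi3 c d b then 0
         else if chi3 c d a = chi3 d c b then 1 else 0)
      else if card {a, b, c, d} = 3 then
        (if b = c then 0
         else if b = d then 1
         else if a = c then
           tv powi (1 - chi3 d a b) * (1 - qv ^ (l + 1) * tv ^ (A + 1)) / (1 - qv ^ (l + 1) * tv ^ (A + 2))
         else 0)
      else if a = c \<and> b = d then 1
      else 0))"

definition P :: "nat list \<Rightarrow> nat \<Rightarrow> filling \<Rightarrow> filling \<Rightarrow> qt" where
  "P \<alpha> i T U =
    (if \<exists>h. h \<le> part \<alpha> i \<and> U = Omega i h T then
       (let h = (SOME h. h \<le> part \<alpha> i \<and> U = Omega i h T) in
        (\<Prod>r<h. rho \<alpha> i T r) * (1 - rho \<alpha> i T h))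
     else 0)"

end

theory Submission
  imports Defs
begin

lemma Omega_eq: "Omega i h T = (\<lambda>(j,r). if j = i \<and> r \<le> h then T (i+1, r)
   else if j = i+1 \<and> r \<le> h then T (i, r) else T (j,r))"
proof (induction h)
  case 0
  show ?case by (rule ext) (auto simp: Omega_def swap_row_def split: if_splits)
next
  case (Suc h)
  have "Omega i (Suc h) T = swap_row i (Suc h) (Omega i h T)"
    by (simp add: Omega_def)
  also have "\<dots> = (\<lambda>(j,r). if j = i \<and> r \<le> Suc h then T (i+1, r)
   else if j = i+1 \<and> r \<le> Suc h then T (i, r) else T (j,r))"
    unfolding Suc.IH swap_row_def by (rule ext) (auto simp: le_Suc_eq split: if_splits)
  finally show ?case .
qed

lemma finite_adg: "finite (adg \<alpha>)"
proof -
  have "adg \<alpha> \<subseteq> {..length \<alpha>} \<times> {..sum_list \<alpha>}"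
  proof
    fix u assume "u \<in> adg \<alpha>"
    then obtain j r where u: "u = (j,r)" "j \<le> length \<alpha>" "r \<le> part \<alpha> j"
      by (auto simp: adg_def dg_def)
    have "part \<alpha> j \<le> sum_list \<alpha>"
      by (auto simp: part_def intro!: elem_le_sum_list)
    then show "u \<in> {..length \<alpha>} \<times> {..sum_list \<alpha>}" using u by auto
  qed
  then show ?thesis by (rule finite_subset) auto
qed

lemma finite_F: "finite (F \<alpha> \<tau>)"
proof -
  have "F \<alpha> \<tau> \<subseteq> {f. \<forall>x. (x \<in> adg \<alpha> \<longrightarrow> f x \<in> {1..length \<alpha>}) \<and> (x \<notin> adg \<alpha> \<longrightarrow> f x = 0)}"
    by (auto simp: F_def)
  then show ?thesis
    by (rule finite_subset) (intro finite_set_of_finite_funs finite_adg, simp)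
qed

lemma telescope:
  fixes \<rho> :: "nat \<Rightarrow> 'a::comm_ring_1"
  shows "(\<Sum>h\<le>k. (\<Prod>r<h. \<rho> r) * (1 - \<rho> h)) = 1 - (\<Prod>r<Suc k. \<rho> r)"
  by (induction k) (auto simp: algebra_simps)

theorem proposition3p4:
  fixes \<alpha> :: "nat list" and \<sigma> :: "nat \<Rightarrow> nat" and i :: nat and T :: filling
  assumes "\<sigma> permutes {1..length \<alpha>}"
    and "1 \<le> i" and "i < length \<alpha>"
    and "part \<alpha> i = part \<alpha> (i + 1)"
    and "T \<in> NAF \<alpha> \<sigma>"
  shows "(\<Sum>U \<in> F \<alpha> (\<sigma> \<circ> transpose i (i + 1)). P \<alpha> i T U) = 1"
proof -
  define m where "m = part \<alpha> i"
  define g where "g h = Omega i h T" for h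
  have TF: "T \<in> F \<alpha> \<sigma>" and NA: "\<And>u v. attack \<alpha> u v \<Longrightarrow> T u \<noteq> T v"
    using assms(5) by (auto simp: NAF_def)
  have inadg: "(i, r) \<in> adg \<alpha>" "(i+1, r) \<in> adg \<alpha>" if "r \<le> m" for r
    using that assms(2,3,4) by (auto simp: adg_def dg_def m_def)
  have distinct_row: "T (i, r) \<noteq> T (i+1, r)" if "r \<le> m" for r
    using NA[of "(i,r)" "(i+1,r)"] inadg[OF that] by (auto simp: attack_def)
  have inj: "inj_on g {..m}"
  proof (rule inj_onI)
    fix h h' assume hh: "h \<in> {..m}" "h' \<in> {..m}" "g h = g h'"
    show "h = h'"
    proof (rule ccontr)
      assume "h \<noteq> h'"
      then consider "h < h'" | "h' < h" by linarith
      then show False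
      proof cases
        case 1
        have "g h (i, h') = g h' (i, h')" using hh by simp
        then show False using 1 hh distinct_row[of h'] by (auto simp: g_def Omega_eq)
      next
        case 2
        have "g h (i, h) = g h' (i, h)" using hh by simp
        then show False using 2 hh distinct_row[of h] by (auto simp: g_def Omega_eq)
      qed
    qed
  qed
  have gF: "g h \<in> F \<alpha> (\<sigma> \<circ> transpose i (i + 1))" if "h \<le> m" for h
  proof -
    have r1: "\<forall>u \<in> adg \<alpha>. T u \<in> {1..length \<alpha>}"
      and r2: "\<forall>j. 1 \<le> j \<and> j \<le> length \<alpha> \<longrightarrow> T (j, 0) = \<sigma> j"
      and r3: "\<forall>u. u \<notin> adg \<alpha> \<longrightarrow> T u = 0" using TF by (auto simp: F_def)
    have a: "\<forall>u \<in> adg \<alpha>. g h u \<in> {1..length \<alpha>}"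
    proof
      fix u assume u: "u \<in> adg \<alpha>"
      obtain j r where jr: "u = (j,r)" by force
      show "g h u \<in> {1..length \<alpha>}"
        using r1 u inadg[of r] that unfolding g_def Omega_eq jr by auto
    qed
    have b: "\<forall>j. 1 \<le> j \<and> j \<le> length \<alpha> \<longrightarrow> g h (j, 0) = (\<sigma> \<circ> transpose i (i + 1)) j"
      using r2 assms(2,3) by (auto simp: g_def Omega_eq)
    have c: "\<forall>u. u \<notin> adg \<alpha> \<longrightarrow> g h u = 0"
    proof (intro allI impI)
      fix u assume u: "u \<notin> adg \<alpha>"
      obtain j r where jr: "u = (j,r)" by force
      show "g h u = 0"
        using r3 u inadg[of r] that unfolding g_def Omega_eq jr by auto
    qed
    show ?thesis using a b c by (simp add: F_def)
  qed
  have Pg: "P \<alpha> i T (g h) = (\<Prod>r<h. rho \<alpha> i T r) * (1 - rho \<alpha> i T h)" if "h \<le> m" for h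
  proof -
    have ex: "\<exists>h'. h' \<le> part \<alpha> i \<and> g h = Omega i h' T" using that by (auto simp: m_def g_def)
    have "(SOME h'. h' \<le> part \<alpha> i \<and> g h = Omega i h' T) = h"
    proof (rule some_equality)
      show "h \<le> part \<alpha> i \<and> g h = Omega i h T" using that by (simp add: m_def g_def)
      fix h' assume "h' \<le> part \<alpha> i \<and> g h = Omega i h' T"
      then show "h' = h" using inj that unfolding inj_on_def g_def m_def by auto
    qed
    then show ?thesis using ex unfolding P_def by (simp add: Let_def)
  qed
  have P0: "P \<alpha> i T U = 0" if "U \<notin> g ` {..m}" for U
    using that unfolding P_def g_def m_def by auto
  have "(\<Sum>U \<in> F \<alpha> (\<sigma> \<circ> transpose i (i + 1)). P \<alpha> i T U) = (\<Sum>U \<in> g ` {..m}. P \<alpha> i T U)"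
    using gF P0 by (intro sum.mono_neutral_right finite_F) auto
  also have "\<dots> = (\<Sum>h\<le>m. P \<alpha> i T (g h))"
    using inj by (simp add: sum.reindex)
  also have "\<dots> = (\<Sum>h\<le>m. (\<Prod>r<h. rho \<alpha> i T r) * (1 - rho \<alpha> i T h))"
    using Pg by simp
  also have "\<dots> = 1 - (\<Prod>r<Suc m. rho \<alpha> i T r)" by (rule telescope)
  also have "(\<Prod>r<Suc m. rho \<alpha> i T r) = 0"
    by (rule prod_zero) (auto simp: rho_def m_def intro!: bexI[of _ m])
  finally show ?thesis by (simp only: diff_zero)
qed

end
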